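(* Let $n\ge 2$ and let $D$ be any $n$-qubit $\textsc{CZ}$-layer. Let $R$ denote the complete qubit reversal $|x_1x_2\cdots x_n\rangle\mapsto|x_nx_{n-1}\cdots x_1\rangle$. Then the unitary $R\,D$ (a $\textsc{CZ}$-layer followed by qubit reversal; denoted $\widehat{\text{-CZ-}}$) can be implemented by a circuit over the gate library $\{\textsc{P},\textsc{P}^\dagger,\textsc{Z},\textsc{CNOT}\}$ in which every $\textsc{CNOT}$ acts on two adjacent qubits of the line $1,2,\dots,n$ (linear nearest neighbour architecture) and whose $\textsc{CNOT}$ depth (two-qubit depth) is at most $2n+2$.
   Context: $\textsc{P}=\mathrm{diag}(1,i)$, $\textsc{Z}=\textsc{P}^2$, $\textsc{CNOT}|a,b\rangle=|a,a\oplus b\rangle$, $\textsc{CZ}|a,b\rangle=(-1)^{ab}|a,b\rangle$. A $\textsc{CZ}$-layer is any product of $\textsc{CZ}$ gates on pairs of the $n$ qubits. Linear nearest neighbour (LNN) architecture: qubits are arranged on a line and two-qubit gates may only act on qubits $j,j+1$. The two-qubit depth of a circuit is the minimum number of time steps needed to execute its two-qubit gates when each step consists of two-qubit gates on pairwise disjoint qubits (single-qubit gates are not counted). *)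

theory Defs
  imports Complex_Main
begin

text \<open>Computational basis states of n qubits (qubits 0..n-1 on a line) are
  bit assignments x :: nat => bool that are False outside {0..<n}.
  Operators on the n-qubit space are given by their matrix entries
  M y x = <y| M |x> over this finite basis.\<close>

definition basis :: "nat \<Rightarrow> (nat \<Rightarrow> bool) set" where
  "basis n = {x. \<forall>i\<ge>n. \<not> x i}"

type_synonym qmat = "(nat \<Rightarrow> bool) \<Rightarrow> (nat \<Rightarrow> bool) \<Rightarrow> complex"

definition qmult :: "nat \<Rightarrow> qmat \<Rightarrow> qmat \<Rightarrow> qmat" where
  "qmult n A B = (\<lambda>y x. \<Sum>z\<in>basis n. A y z * B z x)"

definition qid :: qmat where
  "qid = (\<lambda>y x. if y = x then 1 else 0)"

datatype gate = Pg nat | Pdg nat | Zg nat | CNOT nat nat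

fun gate_mat :: "gate \<Rightarrow> qmat" where
  "gate_mat (Pg q) = (\<lambda>y x. if y = x then (if x q then \<i> else 1) else 0)"
| "gate_mat (Pdg q) = (\<lambda>y x. if y = x then (if x q then - \<i> else 1) else 0)"
| "gate_mat (Zg q) = (\<lambda>y x. if y = x then (if x q then -1 else 1) else 0)"
| "gate_mat (CNOT c t) = (\<lambda>y x. if y = x(t := (x t \<noteq> x c)) then 1 else 0)"

text \<open>A gate sequence is applied left to right: its operator is G_m ... G_1.\<close>
fun circ_mat :: "nat \<Rightarrow> gate list \<Rightarrow> qmat" where
  "circ_mat n [] = qid"
| "circ_mat n (g # gs) = qmult n (circ_mat n gs) (gate_mat g)"

fun lnn_gate :: "nat \<Rightarrow> gate \<Rightarrow> bool" where
  "lnn_gate n (Pg q) = (q < n)"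
| "lnn_gate n (Pdg q) = (q < n)"
| "lnn_gate n (Zg q) = (q < n)"
| "lnn_gate n (CNOT c t) = (c < n \<and> t < n \<and> (t = c + 1 \<or> c = t + 1))"

fun gate_qubits :: "gate \<Rightarrow> nat set" where
  "gate_qubits (Pg q) = {q}"
| "gate_qubits (Pdg q) = {q}"
| "gate_qubits (Zg q) = {q}"
| "gate_qubits (CNOT c t) = {c, t}"

fun is_cnot :: "gate \<Rightarrow> bool" where
  "is_cnot (CNOT c t) = True"
| "is_cnot _ = False"

text \<open>A time step (layer): a gate sequence whose two-qubit gates act on pairwise
  disjoint qubits (single-qubit gates are free).\<close>
definition cnot_layer :: "gate list \<Rightarrow> bool" where
  "cnot_layer gs = (\<forall>i<length gs. \<forall>j<length gs. i \<noteq> j \<longrightarrow> is_cnot (gs ! i) \<longrightarrow>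
      is_cnot (gs ! j) \<longrightarrow> gate_qubits (gs ! i) \<inter> gate_qubits (gs ! j) = {})"

definition lnn_circuit_depth_le :: "nat \<Rightarrow> nat \<Rightarrow> gate list list \<Rightarrow> bool" where
  "lnn_circuit_depth_le n d L = (length L \<le> d \<and> (\<forall>l\<in>set L. cnot_layer l \<and>
      (\<forall>g\<in>set l. lnn_gate n g)))"

definition cz_mat :: "nat \<Rightarrow> nat \<Rightarrow> qmat" where
  "cz_mat j k = (\<lambda>y x. if y = x then (if x j \<and> x k then -1 else 1) else 0)"

fun cz_layer_mat :: "nat \<Rightarrow> (nat \<times> nat) list \<Rightarrow> qmat" where
  "cz_layer_mat n [] = qid"
| "cz_layer_mat n ((j, k) # ps) = qmult n (cz_layer_mat n ps) (cz_mat j k)"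

definition rev_mat :: "nat \<Rightarrow> qmat" where
  "rev_mat n = (\<lambda>y x. if y = (\<lambda>i. if i < n then x (n - 1 - i) else False) then 1 else 0)"

end

theory Submission
  imports Defs
begin


fun gstep :: "gate \<Rightarrow> (nat \<Rightarrow> bool) \<Rightarrow> (nat \<Rightarrow> bool)" where
  "gstep (CNOT c t) x = x(t := (x t \<noteq> x c))"
| "gstep (Pg q) x = x" | "gstep (Pdg q) x = x" | "gstep (Zg q) x = x"

fun gph :: "gate \<Rightarrow> (nat \<Rightarrow> bool) \<Rightarrow> complex" where
  "gph (Pg q) x = (if x q then \<i> else 1)"
| "gph (Pdg q) x = (if x q then - \<i> else 1)"
| "gph (Zg q) x = (if x q then -1 else 1)"
| "gph (CNOT c t) x = 1"

lemma gate_mat_eq: "gate_mat g y x = (if y = gstep g x then gph g x else 0)"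
  by (cases g) auto

fun run :: "gate list \<Rightarrow> (nat \<Rightarrow> bool) \<Rightarrow> (nat \<Rightarrow> bool)" where
  "run [] x = x" | "run (g # gs) x = run gs (gstep g x)"

fun cph :: "gate list \<Rightarrow> (nat \<Rightarrow> bool) \<Rightarrow> complex" where
  "cph [] x = 1" | "cph (g # gs) x = gph g x * cph gs (gstep g x)"

lemma run_append[simp]: "run (a @ b) x = run b (run a x)"
  by (induction a arbitrary: x) auto

lemma cph_append[simp]: "cph (a @ b) x = cph a x * cph b (run a x)"
  by (induction a arbitrary: x) auto

lemma finite_basis: "finite (basis n)"
proof -
  have "basis n \<subseteq> (\<lambda>S i. i \<in> S) ` Pow {..<n}"
  proof
    fix x assume "x \<in> basis n"
    then have "{i. x i} \<in> Pow {..<n}" by (auto simp: basis_def not_le[symmetric])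
    moreover have "x = (\<lambda>i. i \<in> {i. x i})" by auto
    ultimately show "x \<in> (\<lambda>S i. i \<in> S) ` Pow {..<n}" by blast
  qed
  then show ?thesis by (rule finite_subset) auto
qed

lemma sum_delta_mult:
  assumes "w \<in> basis n"
  shows "(\<Sum>z\<in>basis n. f z * (if z = w then c else 0)) = f w * (c::complex)"
proof -
  have "(\<Sum>z\<in>basis n. f z * (if z = w then c else 0)) = (\<Sum>z\<in>basis n. if z = w then f w * c else 0)"
    by (rule sum.cong) auto
  also have "\<dots> = f w * c" using assms finite_basis by (simp add: sum.delta')
  finally show ?thesis .
qed

lemma gstep_basis: "lnn_gate n g \<Longrightarrow> x \<in> basis n \<Longrightarrow> gstep g x \<in> basis n"
  by (cases g) (auto simp: basis_def)

lemma circ_eq: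
  assumes "\<forall>g\<in>set gs. lnn_gate n g" "x \<in> basis n"
  shows "circ_mat n gs y x = (if y = run gs x then cph gs x else 0)"
  using assms
proof (induction gs arbitrary: x)
  case Nil then show ?case by (simp add: qid_def)
next
  case (Cons g gs)
  have b: "gstep g x \<in> basis n" using Cons.prems gstep_basis by auto
  have "circ_mat n (g # gs) y x = (\<Sum>z\<in>basis n. circ_mat n gs y z * (if z = gstep g x then gph g x else 0))"
    by (simp add: qmult_def gate_mat_eq)
  also have "\<dots> = circ_mat n gs y (gstep g x) * gph g x" by (rule sum_delta_mult[OF b])
  also have "\<dots> = (if y = run (g # gs) x then cph (g # gs) x else 0)"
    using Cons.IH[OF _ b] Cons.prems by (auto simp: mult.commute)
  finally show ?case .
qed

fun czp :: "(nat \<times> nat) list \<Rightarrow> (nat \<Rightarrow> bool) \<Rightarrow> complex" where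
  "czp [] x = 1" | "czp ((j,k) # ps) x = czp ps x * (if x j \<and> x k then -1 else 1)"

lemma cz_eq: "x \<in> basis n \<Longrightarrow> cz_layer_mat n ps y x = (if y = x then czp ps x else 0)"
proof (induction ps arbitrary: y)
  case Nil then show ?case by (simp add: qid_def)
next
  case (Cons e ps)
  obtain j k where e: "e = (j,k)" by fastforce
  have "cz_layer_mat n (e # ps) y x = (\<Sum>z\<in>basis n. cz_layer_mat n ps y z * (if z = x then (if x j \<and> x k then -1 else 1) else 0))"
    unfolding e by (simp add: qmult_def cz_mat_def)
  also have "\<dots> = cz_layer_mat n ps y x * (if x j \<and> x k then -1 else 1)" by (rule sum_delta_mult[OF Cons.prems])
  also have "\<dots> = (if y = x then czp (e # ps) x else 0)" using Cons by (simp add: e)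
  finally show ?case .
qed

definition revb :: "nat \<Rightarrow> (nat \<Rightarrow> bool) \<Rightarrow> (nat \<Rightarrow> bool)" where
  "revb n x = (\<lambda>i. if i < n then x (n - 1 - i) else False)"

lemma target_eq: "x \<in> basis n \<Longrightarrow> qmult n (rev_mat n) (cz_layer_mat n ps) y x = (if y = revb n x then czp ps x else 0)"
proof -
  assume x: "x \<in> basis n"
  have "qmult n (rev_mat n) (cz_layer_mat n ps) y x = (\<Sum>z\<in>basis n. rev_mat n y z * (if z = x then czp ps x else 0))"
    unfolding qmult_def using cz_eq[OF x] by simp
  also have "\<dots> = rev_mat n y x * czp ps x" by (rule sum_delta_mult[OF x])
  finally show ?thesis by (simp add: rev_mat_def revb_def)
qed



definition omega :: "int \<Rightarrow> complex" where "omega k = \<i> ^ nat (k mod 4)"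

lemma i4: "\<i> ^ 4 = (1::complex)"
proof -
  have "\<i> ^ 4 = (\<i> ^ 2) ^ (2::nat)" by (simp add: power_mult[symmetric])
  then show ?thesis by simp
qed

lemma i_pow_mod: "\<i> ^ n = \<i> ^ (n mod 4)"
proof -
  have "\<i> ^ n = \<i> ^ (4 * (n div 4) + n mod 4)" by (metis mult_div_mod_eq)
  also have "\<dots> = (\<i> ^ 4) ^ (n div 4) * \<i> ^ (n mod 4)" by (simp only: power_add power_mult)
  also have "\<dots> = \<i> ^ (n mod 4)" by (simp only: i4) simp
  finally show ?thesis .
qed

lemma omega_cong: "a mod 4 = b mod 4 \<Longrightarrow> omega a = omega b"
  by (simp add: omega_def)

lemma omega_add: "omega (a + b) = omega a * omega b"
proof -
  have "omega a * omega b = \<i> ^ (nat (a mod 4) + nat (b mod 4))" by (simp add: omega_def power_add)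
  also have "\<dots> = \<i> ^ ((nat (a mod 4) + nat (b mod 4)) mod 4)" by (rule i_pow_mod)
  also have "(nat (a mod 4) + nat (b mod 4)) mod 4 = nat ((a + b) mod 4)"
  proof -
    have "(nat (a mod 4) + nat (b mod 4)) mod 4 = nat (a mod 4 + b mod 4) mod 4"
      by (simp add: nat_add_distrib)
    also have "\<dots> = nat ((a mod 4 + b mod 4) mod 4)" by (simp add: nat_mod_distrib)
    also have "\<dots> = nat ((a + b) mod 4)" by (simp add: mod_add_eq)
    finally show ?thesis .
  qed
  finally show ?thesis by (simp add: omega_def)
qed

lemma omega_0[simp]: "omega 0 = 1" by (simp add: omega_def)

lemma omega_2: "omega 2 = -1" by (simp add: omega_def power2_eq_square)

lemma prod_omega: "prod_list (map (\<lambda>p. omega (f p)) cs) = omega (sum_list (map f cs))"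
  by (induction cs) (auto simp: omega_add)

lemma pow_omega: "(if b then \<i> else 1) ^ nat (K mod 4) = omega (K * of_bool b)"
  by (simp add: omega_def)



definition sw :: "nat \<Rightarrow> nat \<Rightarrow> nat \<Rightarrow> nat" where
  "sw n r p = (if p \<le> n then (if odd (p + r) then (if p < n then Suc p else p)
                else (if 1 \<le> p then p - 1 else p)) else p)"

fun sq :: "nat \<Rightarrow> nat \<Rightarrow> nat \<Rightarrow> nat" where
  "sq n 0 p = p" | "sq n (Suc r) p = sq n r (sw n r p)"

definition fpos :: "nat \<Rightarrow> nat \<Rightarrow> nat" where
  "fpos n j = (if odd j then j else 2 * (n + 1) - 1 - j)"

definition rfl :: "nat \<Rightarrow> nat \<Rightarrow> nat" where
  "rfl n u = (if u < n + 1 then u else 2 * (n + 1) - 1 - u)"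

definition pos :: "nat \<Rightarrow> nat \<Rightarrow> nat \<Rightarrow> nat" where
  "pos n r j = rfl n ((fpos n j + r) mod (2 * (n + 1)))"

lemma sw_le: "p \<le> n \<Longrightarrow> sw n r p \<le> n"
  unfolding sw_def by auto

lemma sw_sw: "sw n r (sw n r p) = p"
proof (cases "p \<le> n")
  case False then show ?thesis by (simp add: sw_def)
next
  case True
  show ?thesis
  proof (cases "odd (p + r)")
    case o: True
    show ?thesis
    proof (cases "p < n")
      case True then show ?thesis using o by (simp add: sw_def)
    next
      case False then show ?thesis using o \<open>p \<le> n\<close> by (simp add: sw_def)
    qed
  next
    case e: False
    show ?thesis
    proof (cases p)
      case 0 then show ?thesis using e by (simp add: sw_def)
    next
      case (Suc q) then show ?thesis using e True by (simp add: sw_def)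
    qed
  qed
qed

lemma sw_bij: "bij_betw (sw n r) {..n} {..n}"
  by (rule bij_betw_byWitness[where f'="sw n r"]) (auto simp: sw_sw sw_le)

lemma sq_bij: "bij_betw (sq n r) {..n} {..n}"
proof (induction r)
  case 0 then show ?case by (simp add: bij_betw_def)
next
  case (Suc r)
  have "sq n (Suc r) = sq n r \<circ> sw n r" by auto
  then show ?case using bij_betw_trans[OF sw_bij Suc.IH] by (simp add: comp_def)
qed

lemma odd_mod_even: "even (M::nat) \<Longrightarrow> odd (a mod M) = odd a"
  using dvd_mod_iff[of 2 M a] by simp

lemma pos_Suc:
  assumes "j \<le> n"
  shows "pos n (Suc r) j = sw n r (pos n r j)"
proof -
  define M where "M = 2 * (n + 1)"
  define u where "u = (fpos n j + r) mod M"
  have M: "M > 0" "even M" unfolding M_def by auto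
  have uM: "u < M" unfolding u_def using M by auto
  have f: "odd (fpos n j)" unfolding fpos_def M_def using assms by auto
  have pu: "odd u = even r"
  proof -
    have "odd u = odd (fpos n j + r)" unfolding u_def using M odd_mod_even by blast
    then show ?thesis using f by auto
  qed
  have u1: "(fpos n j + Suc r) mod M = (if Suc u = M then 0 else Suc u)"
    unfolding u_def by (simp add: mod_Suc)
  have "pos n (Suc r) j = rfl n (if Suc u = M then 0 else Suc u)"
    unfolding pos_def M_def[symmetric] using u1 by simp
  moreover have "pos n r j = rfl n u" unfolding pos_def u_def M_def by simp
  moreover have "rfl n (if Suc u = M then 0 else Suc u) = sw n r (rfl n u)"
  proof (cases "u < n + 1")
    case True
    have o: "odd (u + r)" using pu by auto
    show ?thesis
    proof (cases "u < n")
      case True then show ?thesis using o unfolding rfl_def sw_def M_def by auto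
    next
      case False
      then have "u = n" using \<open>u < n + 1\<close> by auto
      then show ?thesis using o unfolding rfl_def sw_def M_def by auto
    qed
  next
    case False
    have ev: "even ((2 * n + 1 - u) + r)" using pu uM False unfolding M_def by presburger
    show ?thesis
    proof (cases "Suc u = M")
      case True
      then show ?thesis using False ev unfolding rfl_def sw_def M_def by auto
    next
      case F2: False
      have "1 \<le> 2 * n + 1 - u" using F2 uM unfolding M_def by auto
      then show ?thesis using F2 False uM ev unfolding rfl_def sw_def M_def by auto
    qed
  qed
  ultimately show ?thesis by simp
qed

lemma pos_le: "pos n r j \<le> n"
proof -
  have "(fpos n j + r) mod (2 * (n + 1)) < 2 * (n+1)" by simp
  then show ?thesis unfolding pos_def rfl_def by auto
qed

lemma sq_pos: "j \<le> n \<Longrightarrow> sq n r (pos n r j) = j"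
proof (induction r)
  case 0
  then show ?case by (auto simp: pos_def fpos_def rfl_def)
next
  case (Suc r)
  then show ?case using pos_Suc[OF Suc.prems] by (simp add: sw_sw)
qed

lemma pos_final: "j \<le> n \<Longrightarrow> pos n (Suc n) j = n - j"
proof (cases "odd j")
  case True
  assume j: "j \<le> n"
  have "fpos n j + Suc n < 2 * (n+1)" using True j unfolding fpos_def
    by (cases "j = n") auto
  then show ?thesis using True j unfolding pos_def rfl_def fpos_def by auto
next
  case False
  assume j: "j \<le> n"
  have "(fpos n j + Suc n) mod (2*(n+1)) = n - j"
  proof -
    have e: "fpos n j + Suc n = (n - j) + 2*(n+1)" using False j unfolding fpos_def by auto
    have "(fpos n j + Suc n) mod (2*(n+1)) = ((n - j) + 2*(n+1)) mod (2*(n+1))" by (simp only: e)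
    also have "\<dots> = (n - j) mod (2*(n+1))" by (rule mod_add_self2)
    also have "\<dots> = n - j" by simp
    finally show ?thesis .
  qed
  then show ?thesis unfolding pos_def rfl_def by auto
qed

lemma sq_final: "p \<le> n \<Longrightarrow> sq n (Suc n) p = n - p"
  using sq_pos[of "n - p" n "Suc n"] pos_final[of "n - p" n] by simp



lemma sw_order:
  assumes "p \<le> n" "q \<le> n"
  shows "(sw n r p < sw n r q) = (if q = sw n r p \<and> q \<noteq> p then q < p else p < q)"
  using assms unfolding sw_def by (auto split: if_splits; presburger)



definition FF :: "nat \<Rightarrow> (nat \<Rightarrow> nat \<Rightarrow> int) \<Rightarrow> (nat \<Rightarrow> nat) \<Rightarrow> int" where
  "FF n W \<sigma> = (\<Sum>p\<le>n. \<Sum>q\<le>n. if p < q \<and> \<sigma> q < \<sigma> p then W (\<sigma> q) (\<sigma> p) else 0)"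

definition CC :: "nat \<Rightarrow> nat \<Rightarrow> nat set" where
  "CC n r = {p. p < n \<and> odd (p + r)}"

lemma reindex_sw: "(\<Sum>p\<le>n. g (sw n r p)) = (\<Sum>p\<le>n. (g p :: int))"
  using sum.reindex_bij_betw[OF sw_bij, of g n r] by simp

lemma FF_step:
  assumes inj: "inj_on \<sigma> {..n}"
  shows "FF n W (\<sigma> \<circ> sw n r) = FF n W \<sigma> +
    (\<Sum>p\<in>CC n r. if \<sigma> p < \<sigma> (Suc p) then W (\<sigma> p) (\<sigma> (Suc p)) else - W (\<sigma> (Suc p)) (\<sigma> p))"
proof -
  let ?t = "sw n r"
  define H where "H p q = (if p < q \<and> \<sigma> q < \<sigma> p then W (\<sigma> q) (\<sigma> p) else 0)" for p q
  define A where "A p q = (if q < p \<and> \<sigma> q < \<sigma> p then W (\<sigma> q) (\<sigma> p) else 0)" for p q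
  define H' where "H' p q = (if ?t p < ?t q \<and> \<sigma> q < \<sigma> p then W (\<sigma> q) (\<sigma> p) else 0)" for p q
  define D where "D p = (if ?t p \<noteq> p then A p (?t p) - H p (?t p) else 0)" for p
  have "FF n W (\<sigma> \<circ> ?t) = (\<Sum>p\<le>n. \<Sum>q\<le>n. H' (?t p) (?t q))"
    unfolding FF_def H'_def comp_def by (simp add: sw_sw)
  also have "\<dots> = (\<Sum>p\<le>n. \<Sum>q\<le>n. H' (?t p) q)"
    by (rule sum.cong[OF refl]) (rule reindex_sw[where g="\<lambda>q. H' _ q"])
  also have "\<dots> = (\<Sum>p\<le>n. \<Sum>q\<le>n. H' p q)"
    by (rule reindex_sw[where g="\<lambda>p. \<Sum>q\<le>n. H' p q"])
  also have "\<dots> = (\<Sum>p\<le>n. \<Sum>q\<le>n. H p q + (if q = ?t p \<and> q \<noteq> p then A p q - H p q else 0))"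
  proof (intro sum.cong refl)
    fix p q assume "p \<in> {..n}" "q \<in> {..n}"
    then have "(?t p < ?t q) = (if q = ?t p \<and> q \<noteq> p then q < p else p < q)"
      using sw_order by auto
    then show "H' p q = H p q + (if q = ?t p \<and> q \<noteq> p then A p q - H p q else 0)"
      unfolding H'_def H_def A_def by auto
  qed
  also have "\<dots> = FF n W \<sigma> + (\<Sum>p\<le>n. \<Sum>q\<le>n. (if q = ?t p \<and> q \<noteq> p then A p q - H p q else 0))"
    unfolding FF_def H_def by (simp add: sum.distrib)
  also have "(\<Sum>p\<le>n. \<Sum>q\<le>n. (if q = ?t p \<and> q \<noteq> p then A p q - H p q else 0)) = (\<Sum>p\<le>n. D p)"
  proof (rule sum.cong[OF refl])
    fix p assume p: "p \<in> {..n}"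
    have "(\<Sum>q\<le>n. (if q = ?t p \<and> q \<noteq> p then A p q - H p q else 0))
        = (\<Sum>q\<le>n. (if q = ?t p then (if ?t p \<noteq> p then A p (?t p) - H p (?t p) else 0) else 0))"
      by (rule sum.cong) auto
    also have "\<dots> = D p" using sw_le[of p n r] p unfolding D_def by (simp add: sum.delta)
    finally show "(\<Sum>q\<le>n. (if q = ?t p \<and> q \<noteq> p then A p q - H p q else 0)) = D p" .
  qed
  also have "(\<Sum>p\<le>n. D p) = (\<Sum>p\<in>CC n r \<union> Suc ` CC n r. D p)"
  proof (rule sum.mono_neutral_right)
    show "finite {..n}" by simp
    show "CC n r \<union> Suc ` CC n r \<subseteq> {..n}" unfolding CC_def by auto
    show "\<forall>i\<in>{..n} - (CC n r \<union> Suc ` CC n r). D i = 0"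
    proof
      fix i assume i: "i \<in> {..n} - (CC n r \<union> Suc ` CC n r)"
      have "?t i = i"
      proof (cases i)
        case 0 then show ?thesis using i unfolding sw_def CC_def by auto
      next
        case (Suc k)
        then have "k \<notin> CC n r" using i by auto
        then show ?thesis using i Suc unfolding sw_def CC_def by auto
      qed
      then show "D i = 0" unfolding D_def by simp
    qed
  qed
  also have "\<dots> = (\<Sum>p\<in>CC n r. D p) + (\<Sum>p\<in>Suc ` CC n r. D p)"
    by (rule sum.union_disjoint) (auto simp: CC_def)
  also have "(\<Sum>p\<in>Suc ` CC n r. D p) = (\<Sum>p\<in>CC n r. D (Suc p))"
    by (simp add: sum.reindex)
  also have "(\<Sum>p\<in>CC n r. D p) + (\<Sum>p\<in>CC n r. D (Suc p)) = (\<Sum>p\<in>CC n r. D p + D (Suc p))"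
    by (simp add: sum.distrib)
  also have "\<dots> = (\<Sum>p\<in>CC n r. if \<sigma> p < \<sigma> (Suc p) then W (\<sigma> p) (\<sigma> (Suc p)) else - W (\<sigma> (Suc p)) (\<sigma> p))"
  proof (rule sum.cong[OF refl])
    fix p assume p: "p \<in> CC n r"
    have t1: "?t p = Suc p" "?t (Suc p) = p" using p unfolding CC_def sw_def by auto
    have "\<sigma> p \<noteq> \<sigma> (Suc p)" using inj p unfolding CC_def inj_on_def by fastforce
    then show "D p + D (Suc p) = (if \<sigma> p < \<sigma> (Suc p) then W (\<sigma> p) (\<sigma> (Suc p)) else - W (\<sigma> (Suc p)) (\<sigma> p))"
      unfolding D_def A_def H_def using t1 by auto
  qed
  finally show ?thesis .
qed



fun Pf :: "(nat \<Rightarrow> bool) \<Rightarrow> nat \<Rightarrow> bool" where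
  "Pf x 0 = False" | "Pf x (Suc a) = (Pf x a \<noteq> x a)"

definition II :: "(nat \<Rightarrow> bool) \<Rightarrow> nat \<Rightarrow> nat \<Rightarrow> int" where
  "II x a b = of_bool (Pf x a \<noteq> Pf x b)"

definition ce :: "nat \<times> nat \<Rightarrow> nat \<Rightarrow> nat \<Rightarrow> int" where
  "ce e a b = (let lo = min (fst e) (snd e); hi = max (fst e) (snd e) in
     - of_bool ((a,b) = (lo, Suc hi)) + of_bool ((a,b) = (Suc lo, Suc hi))
     + of_bool ((a,b) = (lo,hi)) - of_bool ((a,b) = (Suc lo, hi)))"

definition dd :: "(nat \<times> nat) list \<Rightarrow> nat \<Rightarrow> nat \<Rightarrow> int" where
  "dd ps a b = sum_list (map (\<lambda>e. ce e a b) ps)"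

definition WW :: "(nat \<times> nat) list \<Rightarrow> (nat \<Rightarrow> bool) \<Rightarrow> nat \<Rightarrow> nat \<Rightarrow> int" where
  "WW ps x a b = dd ps a b * II x a b"

lemma sum_sum_list: "(\<Sum>p\<in>A. sum_list (map (\<lambda>e. f e p) ps)) = sum_list (map (\<lambda>e. \<Sum>p\<in>A. (f e p :: int)) ps)"
  by (induction ps) (auto simp: sum.distrib)

lemma dl: fixes n A B :: nat
  assumes "A \<le> n" "B \<le> n"
  shows "(\<Sum>p\<le>n. \<Sum>q\<le>n. if p < q \<and> n - q = A \<and> n - p = B then g else 0) = (if A < B then g else (0::int))"
proof -
  have "(\<Sum>p\<le>n. \<Sum>q\<le>n. if p < q \<and> n - q = A \<and> n - p = B then g else 0)
      = (\<Sum>p\<le>n. \<Sum>q\<le>n. if q = n - A then (if p < n - A \<and> p = n - B then g else 0) else 0)"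
  proof (intro sum.cong refl)
    fix p q assume "p \<in> {..n}" "q \<in> {..n}"
    then have "(p < q \<and> n - q = A \<and> n - p = B) = (q = n - A \<and> p < n - A \<and> p = n - B)"
      using assms by auto
    then show "(if p < q \<and> n - q = A \<and> n - p = B then g else 0) = (if q = n - A then (if p < n - A \<and> p = n - B then g else 0) else 0)"
      by auto
  qed
  also have "\<dots> = (\<Sum>p\<le>n. if p = n - B then (if n - B < n - A then g else 0) else 0)"
    by (intro sum.cong refl) (auto simp: sum.delta)
  also have "\<dots> = (if n - B < n - A then g else 0)" by (simp add: sum.delta)
  finally show ?thesis using assms by auto
qed

lemma G_eq:
  assumes "lo < hi" "hi < n"
  shows "(\<Sum>p\<le>n. \<Sum>q\<le>n. if p < q then ce (lo, hi) (n - q) (n - p) * II x (n - q) (n - p) else 0)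
    = - II x lo (Suc hi) + II x (Suc lo) (Suc hi) + II x lo hi - II x (Suc lo) hi"
proof -
  let ?d = "\<lambda>A B p q. (if p < q \<and> n - q = A \<and> n - p = B then II x A B else 0)"
  have "(\<Sum>p\<le>n. \<Sum>q\<le>n. if p < q then ce (lo, hi) (n - q) (n - p) * II x (n - q) (n - p) else 0)
     = (\<Sum>p\<le>n. \<Sum>q\<le>n. - ?d lo (Suc hi) p q + ?d (Suc lo) (Suc hi) p q + ?d lo hi p q - ?d (Suc lo) hi p q)"
    using assms by (intro sum.cong refl) (auto simp: ce_def Let_def)
  also have "\<dots> = - (\<Sum>p\<le>n. \<Sum>q\<le>n. ?d lo (Suc hi) p q) + (\<Sum>p\<le>n. \<Sum>q\<le>n. ?d (Suc lo) (Suc hi) p q)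
      + (\<Sum>p\<le>n. \<Sum>q\<le>n. ?d lo hi p q) - (\<Sum>p\<le>n. \<Sum>q\<le>n. ?d (Suc lo) hi p q)"
    by (simp add: sum.distrib sum_subtractf sum_negf)
  also have "\<dots> = - II x lo (Suc hi) + II x (Suc lo) (Suc hi) + II x lo hi - (if Suc lo < hi then II x (Suc lo) hi else 0)"
    using assms dl[of lo n "Suc hi" "II x lo (Suc hi)"] dl[of "Suc lo" n "Suc hi" "II x (Suc lo) (Suc hi)"]
      dl[of lo n hi "II x lo hi"] dl[of "Suc lo" n hi "II x (Suc lo) hi"] by simp
  also have "(if Suc lo < hi then II x (Suc lo) hi else 0) = II x (Suc lo) hi"
  proof (cases "Suc lo < hi")
    case False
    then have "hi = Suc lo" using assms by auto
    then show ?thesis by (simp add: II_def)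
  qed simp
  finally show ?thesis .
qed

lemma G_mod:
  "(- II x lo (Suc hi) + II x (Suc lo) (Suc hi) + II x lo hi - II x (Suc lo) hi) mod 4
   = (2 * of_bool (x lo \<and> x hi)) mod 4"
  by (cases "Pf x lo"; cases "Pf x hi"; cases "x lo"; cases "x hi") (auto simp: II_def)

lemma final_id:
  assumes "\<forall>(j, k)\<in>set ps. j < n \<and> k < n \<and> j \<noteq> k"
  shows "(\<Sum>p\<le>n. \<Sum>q\<le>n. if p < q then WW ps x (n - q) (n - p) else 0) mod 4
       = (2 * sum_list (map (\<lambda>(j,k). of_bool (x j \<and> x k)) ps)) mod 4"
  using assms
proof (induction ps)
  case Nil
  show ?case unfolding WW_def dd_def list.map(1) sum_list.Nil mult_zero_left if_cancel sum.neutral_const by simp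
next
  case (Cons e ps)
  obtain j k where e: "e = (j,k)" by fastforce
  define lo where "lo = min j k"
  define hi where "hi = max j k"
  have lh: "lo < hi" "hi < n" using Cons.prems e unfolding lo_def hi_def by auto
  have ce_sym: "ce e = ce (lo, hi)" unfolding e ce_def lo_def hi_def by auto
  have xx: "(x j \<and> x k) = (x lo \<and> x hi)" unfolding lo_def hi_def by (auto simp: min_def max_def)
  have split: "(\<Sum>p\<le>n. \<Sum>q\<le>n. if p < q then WW (e # ps) x (n - q) (n - p) else 0)
     = (\<Sum>p\<le>n. \<Sum>q\<le>n. if p < q then ce (lo, hi) (n - q) (n - p) * II x (n - q) (n - p) else 0)
       + (\<Sum>p\<le>n. \<Sum>q\<le>n. if p < q then WW ps x (n - q) (n - p) else 0)"
    unfolding sum.distrib[symmetric] by (intro sum.cong refl) (auto simp: WW_def dd_def ce_sym algebra_simps)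
  have IH: "(\<Sum>p\<le>n. \<Sum>q\<le>n. if p < q then WW ps x (n - q) (n - p) else 0) mod 4
       = (2 * sum_list (map (\<lambda>(j,k). of_bool (x j \<and> x k)) ps)) mod 4" using Cons by auto
  let ?G = "- II x lo (Suc hi) + II x (Suc lo) (Suc hi) + II x lo hi - II x (Suc lo) hi"
  let ?S = "(\<Sum>p\<le>n. \<Sum>q\<le>n. if p < q then WW ps x (n - q) (n - p) else 0)"
  let ?T = "sum_list (map (\<lambda>(j,k). of_bool (x j \<and> x k)) ps) :: int"
  have "(?G + ?S) mod 4 = (?G mod 4 + ?S mod 4) mod 4" by (rule mod_add_eq[symmetric])
  also have "\<dots> = ((2 * of_bool (x lo \<and> x hi)) mod 4 + (2 * ?T) mod 4) mod 4" using G_mod[of x lo hi] IH by simp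
  also have "\<dots> = (2 * of_bool (x lo \<and> x hi) + 2 * ?T) mod 4" by (rule mod_add_eq)
  finally show ?case unfolding split G_eq[OF lh] using xx e by (simp add: algebra_simps)

qed



definition st :: "nat \<Rightarrow> nat \<Rightarrow> (nat \<Rightarrow> bool) \<Rightarrow> (nat \<Rightarrow> bool)" where
  "st n r x = (\<lambda>i. i < n \<and> (Pf x (sq n r i) \<noteq> Pf x (sq n r (Suc i))))"

definition ctrl :: "nat \<Rightarrow> nat \<Rightarrow> nat list" where
  "ctrl n r = filter (\<lambda>p. odd (p + r)) [0..<n]"

definition KK :: "nat \<Rightarrow> (nat \<times> nat) list \<Rightarrow> nat \<Rightarrow> nat \<Rightarrow> int" where
  "KK n ps r p = (let a = sq n r p; b = sq n r (Suc p) in if a < b then dd ps a b else - dd ps b a)"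

definition PH :: "nat \<Rightarrow> (nat \<times> nat) list \<Rightarrow> nat \<Rightarrow> gate list" where
  "PH n ps r = concat (map (\<lambda>p. replicate (nat (KK n ps r p mod 4)) (Pg p)) (ctrl n r))"

definition C1 :: "nat \<Rightarrow> nat \<Rightarrow> gate list" where
  "C1 n r = map (\<lambda>p. CNOT p (Suc p)) (filter (\<lambda>p. Suc p < n) (ctrl n r))"

definition C2 :: "nat \<Rightarrow> nat \<Rightarrow> gate list" where
  "C2 n r = map (\<lambda>p. CNOT p (p - 1)) (filter (\<lambda>p. 1 \<le> p) (ctrl n r))"

lemma set_ctrl: "set (ctrl n r) = CC n r"
  unfolding ctrl_def CC_def by auto

lemma distinct_ctrl: "distinct (ctrl n r)"
  unfolding ctrl_def by simp

lemma run_reps: "run (concat (map (\<lambda>p. replicate (k p) (Pg p)) cs)) y = y"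
proof (induction cs)
  case Nil then show ?case by simp
next
  case (Cons c cs)
  have "run (replicate m (Pg c)) y = y" for m by (induction m) auto
  then show ?case using Cons by simp
qed

lemma cph_reps: "cph (concat (map (\<lambda>p. replicate (k p) (Pg p)) cs)) y
   = prod_list (map (\<lambda>p. (if y p then \<i> else 1) ^ (k p)) cs)"
proof (induction cs)
  case Nil then show ?case by simp
next
  case (Cons c cs)
  have r: "run (replicate m (Pg c)) y = y" for m by (induction m) auto
  have "cph (replicate m (Pg c)) y = (if y c then \<i> else 1) ^ m" for m by (induction m) auto
  then show ?case using Cons r by simp
qed

lemma cph_cnots: "cph (map (\<lambda>p. CNOT p (t p)) cs) y = 1"
  by (induction cs arbitrary: y) auto

lemma run_cnots1:
  assumes "distinct (map t cs)" "\<forall>p\<in>set cs. \<forall>q\<in>set cs. t p \<noteq> q" "p \<in> set cs"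
  shows "run (map (\<lambda>p. CNOT p (t p)) cs) y (t p) = (y (t p) \<noteq> y p)"
  and "i \<notin> t ` set cs \<Longrightarrow> run (map (\<lambda>p. CNOT p (t p)) cs) y i = y i"
proof -
  have main: "(\<forall>p\<in>set cs. run (map (\<lambda>p. CNOT p (t p)) cs) y (t p) = (y (t p) \<noteq> y p)) \<and>
        (\<forall>i. i \<notin> t ` set cs \<longrightarrow> run (map (\<lambda>p. CNOT p (t p)) cs) y i = y i)"
    using assms(1,2)
  proof (induction cs arbitrary: y)
    case Nil then show ?case by simp
  next
    case (Cons c cs)
    let ?y = "y(t c := (y (t c) \<noteq> y c))"
    have IH: "(\<forall>p\<in>set cs. run (map (\<lambda>p. CNOT p (t p)) cs) ?y (t p) = (?y (t p) \<noteq> ?y p)) \<and>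
        (\<forall>i. i \<notin> t ` set cs \<longrightarrow> run (map (\<lambda>p. CNOT p (t p)) cs) ?y i = ?y i)"
      using Cons by auto
    have nc: "t c \<notin> t ` set cs" using Cons.prems by auto
    show ?case
    proof (intro conjI allI ballI impI)
      fix p assume p: "p \<in> set (c # cs)"
      show "run (map (\<lambda>p. CNOT p (t p)) (c # cs)) y (t p) = (y (t p) \<noteq> y p)"
      proof (cases "p = c")
        case True then show ?thesis using IH nc by simp
      next
        case False
        then have "p \<in> set cs" using p by simp
        moreover have "t p \<noteq> t c" using nc \<open>p \<in> set cs\<close> by (metis image_eqI)
        moreover have "p \<noteq> t c" using Cons.prems \<open>p \<in> set cs\<close> by auto
        ultimately show ?thesis using IH by simp
      qed
    next
      fix i assume "i \<notin> t ` set (c # cs)"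
      then show "run (map (\<lambda>p. CNOT p (t p)) (c # cs)) y i = y i" using IH by simp
    qed
  qed
  show "run (map (\<lambda>p. CNOT p (t p)) cs) y (t p) = (y (t p) \<noteq> y p)" using main assms(3) by blast
  show "i \<notin> t ` set cs \<Longrightarrow> run (map (\<lambda>p. CNOT p (t p)) cs) y i = y i" using main by blast
qed

lemma run_cnots2:
  assumes "distinct (map t cs)" "\<forall>p\<in>set cs. \<forall>q\<in>set cs. t p \<noteq> q" "i \<notin> t ` set cs"
  shows "run (map (\<lambda>p. CNOT p (t p)) cs) y i = y i"
proof (cases cs)
  case Nil then show ?thesis by simp
next
  case (Cons c cs')
  then have "c \<in> set cs" by simp
  from run_cnots1(2)[OF assms(1,2) this assms(3)] show ?thesis .
qed



lemma round_run:
  "run (C2 n r) (run (C1 n r) (st n r x)) = st n (Suc r) x"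
proof
  fix i
  let ?cs1 = "filter (\<lambda>p. Suc p < n) (ctrl n r)"
  let ?cs2 = "filter (\<lambda>p. 1 \<le> p) (ctrl n r)"
  define y0 where "y0 = st n r x"
  define y1 where "y1 = run (C1 n r) y0"
  define y2 where "y2 = run (C2 n r) y1"
  have d1: "distinct (map Suc ?cs1)" using distinct_ctrl by (simp add: distinct_map)
  have n1: "\<forall>p\<in>set ?cs1. \<forall>q\<in>set ?cs1. Suc p \<noteq> q" by (auto simp: ctrl_def)
  have d2: "distinct (map (\<lambda>p. p - 1) ?cs2)"
    using distinct_ctrl by (auto simp: distinct_map inj_on_def)
  have n2: "\<forall>p\<in>set ?cs2. \<forall>q\<in>set ?cs2. p - 1 \<noteq> q" by (auto simp: ctrl_def; presburger)
  have y1: "y1 j = (if 1 \<le> j \<and> j < n \<and> odd (j - 1 + r) then y0 j \<noteq> y0 (j - 1) else y0 j)" for j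
  proof (cases "1 \<le> j \<and> j < n \<and> odd (j - 1 + r)")
    case True
    then have m: "j - 1 \<in> set ?cs1" by (auto simp: ctrl_def)
    have sj: "Suc (j - 1) = j" using True by auto
    have r: "run (C1 n r) y0 j = (y0 j \<noteq> y0 (j - 1))"
      using run_cnots1(1)[OF d1 n1 m, of y0] unfolding C1_def sj .
    show ?thesis unfolding y1_def by (simp only: if_P[OF True] r)
  next
    case False
    then have nm: "j \<notin> Suc ` set ?cs1" by (auto simp: ctrl_def)
    have r: "run (C1 n r) y0 j = y0 j"
      using run_cnots2[OF d1 n1 nm, of y0] unfolding C1_def .
    show ?thesis unfolding y1_def by (simp only: if_not_P[OF False] r)
  qed
  have y2: "y2 j = (if Suc j < n \<and> odd (Suc j + r) then y1 j \<noteq> y1 (Suc j) else y1 j)" for j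
  proof (cases "Suc j < n \<and> odd (Suc j + r)")
    case True
    then have m: "Suc j \<in> set ?cs2" by (auto simp: ctrl_def)
    have r: "run (C2 n r) y1 j = (y1 j \<noteq> y1 (Suc j))"
      using run_cnots1(1)[OF d2 n2 m, of y1] unfolding C2_def by simp
    show ?thesis unfolding y2_def by (simp only: if_P[OF True] r)
  next
    case False
    then have nm: "j \<notin> (\<lambda>p. p - 1) ` set ?cs2" by (auto simp: ctrl_def)
    have r: "run (C2 n r) y1 j = y1 j"
      using run_cnots2[OF d2 n2 nm, of y1] unfolding C2_def .
    show ?thesis unfolding y2_def by (simp only: if_not_P[OF False] r)
  qed
  let ?s = "\<lambda>j. Pf x (sq n r j)"
  have y0: "y0 j = (j < n \<and> (?s j \<noteq> ?s (Suc j)))" for j unfolding y0_def st_def by simp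
  have goal: "st n (Suc r) x i = (i < n \<and> (?s (sw n r i) \<noteq> ?s (sw n r (Suc i))))"
    unfolding st_def by simp
  have "y2 i = st n (Suc r) x i"
  proof (cases "i < n")
    case False
    then show ?thesis unfolding goal y2 y1 y0 by auto
  next
    case iN: True
    show ?thesis
    proof (cases "odd (i + r)")
      case True
      have "sw n r i = Suc i" "sw n r (Suc i) = i" using True iN unfolding sw_def by auto
      moreover have "\<not> (1 \<le> i \<and> i < n \<and> odd (i - 1 + r))" using True by (cases i) auto
      ultimately show ?thesis unfolding goal y2 y1 y0 using True iN by auto
    next
      case False
      have a: "sw n r i = (if 1 \<le> i then i - 1 else i)" using False iN unfolding sw_def by auto
      have b: "sw n r (Suc i) = (if Suc i < n then Suc (Suc i) else Suc i)" using False iN unfolding sw_def by auto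
      have c: "(1 \<le> i \<and> i < n \<and> odd (i - 1 + r)) = (1 \<le> i)" using False iN by (cases i) auto
      have d: "(Suc j < n \<and> odd (Suc j + r)) = (Suc j < n)" if "j = i" for j using False that by auto
      have e: "\<not> (1 \<le> Suc i \<and> Suc i < n \<and> odd (Suc i - 1 + r))" using False by auto
      show ?thesis unfolding goal y2 y1 y0 a b using c d e iN False by (auto simp: Suc_diff_1)
    qed
  qed
  then show "run (C2 n r) (run (C1 n r) (st n r x)) i = st n (Suc r) x i"
    unfolding y2_def y1_def y0_def .
qed



lemma II_sym: "II x a b = II x b a"
  unfolding II_def by auto

lemma round_phase:
  "cph (PH n ps r @ C1 n r @ C2 n r) (st n r x) = omega (\<Sum>p\<in>CC n r.
     if sq n r p < sq n r (Suc p) then WW ps x (sq n r p) (sq n r (Suc p))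
     else - WW ps x (sq n r (Suc p)) (sq n r p))"
proof -
  have c1: "cph (C1 n r) y = 1" for y unfolding C1_def by (rule cph_cnots)
  have c2: "cph (C2 n r) y = 1" for y unfolding C2_def by (rule cph_cnots)
  have "cph (PH n ps r @ C1 n r @ C2 n r) (st n r x) = cph (PH n ps r) (st n r x)"
    by (simp add: c1 c2)
  also have "\<dots> = prod_list (map (\<lambda>p. omega (KK n ps r p * of_bool (st n r x p))) (ctrl n r))"
    unfolding PH_def cph_reps pow_omega ..
  also have "\<dots> = omega (sum_list (map (\<lambda>p. KK n ps r p * of_bool (st n r x p)) (ctrl n r)))"
    by (rule prod_omega)
  also have "sum_list (map (\<lambda>p. KK n ps r p * of_bool (st n r x p)) (ctrl n r))
      = (\<Sum>p\<in>CC n r. KK n ps r p * of_bool (st n r x p))"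
    using distinct_ctrl set_ctrl by (metis sum_list_distinct_conv_sum_set)
  also have "\<dots> = (\<Sum>p\<in>CC n r.
     if sq n r p < sq n r (Suc p) then WW ps x (sq n r p) (sq n r (Suc p))
     else - WW ps x (sq n r (Suc p)) (sq n r p))"
  proof (rule sum.cong[OF refl])
    fix p assume "p \<in> CC n r"
    then have "p < n" unfolding CC_def by simp
    then show "KK n ps r p * of_bool (st n r x p) = (if sq n r p < sq n r (Suc p) then WW ps x (sq n r p) (sq n r (Suc p))
     else - WW ps x (sq n r (Suc p)) (sq n r p))"
      unfolding KK_def st_def WW_def Let_def using II_sym[of x "sq n r p" "sq n r (Suc p)"]
      by (auto simp: II_def)
  qed
  finally show ?thesis .
qed

definition RR :: "nat \<Rightarrow> (nat \<times> nat) list \<Rightarrow> nat \<Rightarrow> gate list" where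
  "RR n ps r = PH n ps r @ C1 n r @ C2 n r"

lemma FF_zero: "FF n W (\<lambda>a. a) = 0"
  unfolding FF_def by (intro sum.neutral ballI) auto

lemma sq_Suc_fun: "sq n (Suc r) = sq n r \<circ> sw n r"
  by (rule ext) simp

lemma rounds:
  "run (concat (map (RR n ps) [0..<k])) (st n 0 x) = st n k x \<and>
   cph (concat (map (RR n ps) [0..<k])) (st n 0 x) = omega (FF n (WW ps x) (sq n k))"
proof (induction k)
  case 0 then show ?case by (simp add: FF_zero)
next
  case (Suc k)
  have inj: "inj_on (sq n k) {..n}" using sq_bij bij_betw_def by blast
  have "FF n (WW ps x) (sq n (Suc k)) = FF n (WW ps x) (sq n k) + (\<Sum>p\<in>CC n k.
     if sq n k p < sq n k (Suc p) then WW ps x (sq n k p) (sq n k (Suc p))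
     else - WW ps x (sq n k (Suc p)) (sq n k p))"
    unfolding sq_Suc_fun by (rule FF_step[OF inj])
  note eq = this
  have rp: "run (PH n ps k) y = y" for y unfolding PH_def by (rule run_reps)
  have r1: "run (RR n ps k) (st n k x) = st n (Suc k) x"
    unfolding RR_def run_append rp by (rule round_run)
  have c1: "cph (RR n ps k) (st n k x) = omega (\<Sum>p\<in>CC n k.
     if sq n k p < sq n k (Suc p) then WW ps x (sq n k p) (sq n k (Suc p))
     else - WW ps x (sq n k (Suc p)) (sq n k p))"
    unfolding RR_def by (rule round_phase)
  have cc: "concat (map (RR n ps) [0..<Suc k]) = concat (map (RR n ps) [0..<k]) @ RR n ps k" by simp
  show ?case unfolding cc run_append cph_append using Suc.IH r1 c1 eq by (simp only: omega_add)
qed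

lemma st0: "x \<in> basis n \<Longrightarrow> st n 0 x = x"
  unfolding st_def basis_def by (auto simp: not_le[symmetric])

lemma st_final: "st n (Suc n) x = revb n x"
proof
  fix i
  show "st n (Suc n) x i = revb n x i"
  proof (cases "i < n")
    case True
    have a: "sq n (Suc n) i = Suc (n - Suc i)" using sq_final[of i n] True by simp
    have b: "sq n (Suc n) (Suc i) = n - Suc i" using sq_final[of "Suc i" n] True by simp
    show ?thesis unfolding st_def revb_def a b using True by auto
  next
    case False then show ?thesis unfolding st_def revb_def by auto
  qed
qed

lemma FF_final: "FF n W (sq n (Suc n)) = (\<Sum>p\<le>n. \<Sum>q\<le>n. if p < q then W (n - q) (n - p) else 0)"
  unfolding FF_def
proof (intro sum.cong refl)
  fix p q assume "p \<in> {..n}" "q \<in> {..n}"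
  then show "(if p < q \<and> sq n (Suc n) q < sq n (Suc n) p then W (sq n (Suc n) q) (sq n (Suc n) p) else 0)
      = (if p < q then W (n - q) (n - p) else 0)"
    using sq_final[of p n] sq_final[of q n] by auto
qed

lemma czp_omega: "czp ps x = omega (2 * sum_list (map (\<lambda>(j,k). of_bool (x j \<and> x k)) ps))"
proof (induction ps)
  case Nil then show ?case by simp
next
  case (Cons e ps)
  obtain j k where e: "e = (j,k)" by fastforce
  have "(if x j \<and> x k then -1 else 1) = omega (2 * of_bool (x j \<and> x k))"
    using omega_2 by auto
  then show ?case using Cons by (simp add: e omega_add[symmetric] algebra_simps)
qed



lemma cnot_layer_gen:
  assumes "\<forall>g\<in>set pre. \<not> is_cnot g" "distinct cs"
    "\<forall>p\<in>set cs. \<forall>q\<in>set cs. p \<noteq> q \<longrightarrow> {p, t p} \<inter> {q, t q} = {}"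
  shows "cnot_layer (pre @ map (\<lambda>p. CNOT p (t p)) cs)"
  unfolding cnot_layer_def
proof (intro allI impI)
  fix i j
  let ?gs = "pre @ map (\<lambda>p. CNOT p (t p)) cs"
  assume i: "i < length ?gs" and j: "j < length ?gs" and ij: "i \<noteq> j"
    and ci: "is_cnot (?gs ! i)" and cj: "is_cnot (?gs ! j)"
  have ni: "\<not> i < length pre"
  proof
    assume "i < length pre"
    then have "?gs ! i = pre ! i" by (simp add: nth_append)
    then show False using ci assms(1) \<open>i < length pre\<close> by (metis nth_mem)
  qed
  have nj: "\<not> j < length pre"
  proof
    assume "j < length pre"
    then have "?gs ! j = pre ! j" by (simp add: nth_append)
    then show False using cj assms(1) \<open>j < length pre\<close> by (metis nth_mem)
  qed
  define a where "a = i - length pre"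
  define b where "b = j - length pre"
  have a: "a < length cs" "?gs ! i = CNOT (cs ! a) (t (cs ! a))"
    using i ni unfolding a_def by (auto simp: nth_append)
  have b: "b < length cs" "?gs ! j = CNOT (cs ! b) (t (cs ! b))"
    using j nj unfolding b_def by (auto simp: nth_append)
  have "a \<noteq> b" using ij ni nj unfolding a_def b_def by auto
  then have "cs ! a \<noteq> cs ! b" using assms(2) a(1) b(1) by (simp add: nth_eq_iff_index_eq)
  then show "gate_qubits (?gs ! i) \<inter> gate_qubits (?gs ! j) = {}"
    using assms(3) a b by simp
qed

definition LL :: "nat \<Rightarrow> (nat \<times> nat) list \<Rightarrow> gate list list" where
  "LL n ps = concat (map (\<lambda>r. [PH n ps r @ C1 n r, [] @ C2 n r]) [0..<Suc n])"

lemma PH_ok: "g \<in> set (PH n ps r) \<Longrightarrow> \<not> is_cnot g \<and> lnn_gate n g"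
  unfolding PH_def by (auto simp: ctrl_def)

lemma lay1_ok: "cnot_layer (PH n ps r @ C1 n r)"
  unfolding C1_def
  by (rule cnot_layer_gen) (auto simp: PH_ok distinct_ctrl ctrl_def)

lemma lay2_ok: "cnot_layer ([] @ C2 n r)"
  unfolding C2_def
proof (rule cnot_layer_gen)
  show "\<forall>p\<in>set (filter ((\<le>) 1) (ctrl n r)). \<forall>q\<in>set (filter ((\<le>) 1) (ctrl n r)).
     p \<noteq> q \<longrightarrow> {p, p - 1} \<inter> {q, q - 1} = {}"
    by (auto simp: ctrl_def; presburger)
qed (auto simp: distinct_ctrl)

lemma LL_gates: "l \<in> set (LL n ps) \<Longrightarrow> g \<in> set l \<Longrightarrow> lnn_gate n g"
  unfolding LL_def by (auto simp: C1_def C2_def ctrl_def dest: PH_ok)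

lemma len2: "length (concat (map (\<lambda>r. [a r, b r]) xs)) = 2 * length xs"
  by (induction xs) auto

lemma cc2: "concat (concat (map (\<lambda>r. [a r, b r]) xs)) = concat (map (\<lambda>r. a r @ b r) xs)"
  by (induction xs) auto

lemma LL_valid: "lnn_circuit_depth_le n (2 * n + 2) (LL n ps)"
proof -
  have "length (LL n ps) = 2 * n + 2"
    unfolding LL_def len2 by simp
  moreover have "\<forall>l\<in>set (LL n ps). cnot_layer l"
    unfolding LL_def using lay1_ok lay2_ok by auto
  ultimately show ?thesis unfolding lnn_circuit_depth_le_def using LL_gates[of _ n ps] by auto
qed

lemma concat_LL: "concat (LL n ps) = concat (map (RR n ps) [0..<Suc n])"
  unfolding LL_def RR_def cc2 by simp

theorem theorem2:
  fixes n :: nat and ps :: "(nat \<times> nat) list"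
  assumes "n \<ge> 2"
    and "\<forall>(j, k)\<in>set ps. j < n \<and> k < n \<and> j \<noteq> k"
  shows "\<exists>L. lnn_circuit_depth_le n (2 * n + 2) L \<and>
           (\<forall>y\<in>basis n. \<forall>x\<in>basis n.
              circ_mat n (concat L) y x = qmult n (rev_mat n) (cz_layer_mat n ps) y x)"
proof (intro exI conjI ballI)
  show "lnn_circuit_depth_le n (2 * n + 2) (LL n ps)" by (rule LL_valid)
  fix y x assume y: "y \<in> basis n" and x: "x \<in> basis n"
  have g: "\<forall>g\<in>set (concat (LL n ps)). lnn_gate n g" using LL_gates by auto
  have R: "run (concat (LL n ps)) x = revb n x"
    using rounds[of n ps "Suc n" x] st0[OF x] st_final unfolding concat_LL by simp
  have "cph (concat (LL n ps)) x = omega (FF n (WW ps x) (sq n (Suc n)))"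
    using rounds[of n ps "Suc n" x] st0[OF x] unfolding concat_LL by simp
  also have "\<dots> = omega (\<Sum>p\<le>n. \<Sum>q\<le>n. if p < q then WW ps x (n - q) (n - p) else 0)"
    unfolding FF_final ..
  also have "\<dots> = omega (2 * sum_list (map (\<lambda>(j,k). of_bool (x j \<and> x k)) ps))"
    by (rule omega_cong[OF final_id[OF assms(2)]])
  also have "\<dots> = czp ps x" by (rule czp_omega[symmetric])
  finally have C: "cph (concat (LL n ps)) x = czp ps x" .
  show "circ_mat n (concat (LL n ps)) y x = qmult n (rev_mat n) (cz_layer_mat n ps) y x"
    unfolding circ_eq[OF g x] target_eq[OF x] R C ..
qed


end
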